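(* Let $\Omega\subset\mathbb{R}^n$ be an open set. For every measurable $E\subset\mathbb{R}^n$ with $\widetilde{{\rm Per}}^\kappa_{s_0}(E,\Omega)<\infty$ for some $s_0\in(0,1/2)$, $$\lim_{s\to0^+}s\,\widetilde{{\rm Per}}^\kappa_s(E,\Omega)=0.$$
   Context: Let $\mathcal{R}$ be a root system in $\mathbb{R}^n$ with positive subsystem $\mathcal{R}_+$ and $\kappa:\mathcal{R}\to[0,\infty)$ a multiplicity function invariant under the associated reflection group. Set $w_\kappa(x)=\prod_{\alpha\in\mathcal{R}_+}|\langle\alpha,x\rangle|^{2\kappa(\alpha)}$, $\mu_\kappa=w_\kappa\,dx$, $\chi=\sum_{\alpha\in\mathcal{R}_+}\kappa(\alpha)$, $\mathfrak{c}_\kappa=\int e^{-|x|^2/2}\mu_\kappa(dx)\in(0,\infty)$, and $\nu_\kappa=\mathfrak{c}_\kappa^{-1}e^{-|x|^2/2}\mu_\kappa$. For disjoint measurable $A,B$ and $s\in(0,1/2)$, $\widetilde L^\kappa_s(A,B)=\int_A\int_B|x-y|^{-(2\chi+n+2s)}\nu_\kappa(dy)\nu_\kappa(dx)$, and for open $\Omega$ and measurable $E$ (with $E^c=\mathbb{R}^n\setminus E$), $\widetilde{{\rm Per}}^\kappa_s(E,\Omega)=\widetilde L^\kappa_s(E\cap\Omega,E^c\cap\Omega)+\widetilde L^\kappa_s(E\cap\Omega,E^c\cap\Omega^c)+\widetilde L^\kappa_s(E\cap\Omega^c,E^c\cap\Omega)$. *)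

theory Defs
  imports "HOL-Analysis.Analysis"
begin

definition refl_root :: "'a::euclidean_space \<Rightarrow> 'a \<Rightarrow> 'a" where
  "refl_root \<alpha> x = x - (2 * (\<alpha> \<bullet> x) / (\<alpha> \<bullet> \<alpha>)) *\<^sub>R \<alpha>"

definition root_system :: "'a::euclidean_space set \<Rightarrow> bool" where
  "root_system R \<longleftrightarrow> finite R \<and> 0 \<notin> R \<and>
     (\<forall>\<alpha>\<in>R. \<forall>\<beta>\<in>R. refl_root \<alpha> \<beta> \<in> R) \<and>
     (\<forall>\<alpha>\<in>R. \<forall>c::real. c *\<^sub>R \<alpha> \<in> R \<longrightarrow> c = 1 \<or> c = -1)"

definition positive_subsystem :: "'a::euclidean_space set \<Rightarrow> 'a set \<Rightarrow> bool" where
  "positive_subsystem R Rp \<longleftrightarrow>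
     (\<exists>\<beta>. (\<forall>\<alpha>\<in>R. \<alpha> \<bullet> \<beta> \<noteq> 0) \<and> Rp = {\<alpha>\<in>R. \<alpha> \<bullet> \<beta> > 0})"

text \<open>Multiplicity function: nonnegative on R and invariant under the reflection
  group (equivalently, under its generating reflections).\<close>
definition multiplicity :: "'a::euclidean_space set \<Rightarrow> ('a \<Rightarrow> real) \<Rightarrow> bool" where
  "multiplicity R \<kappa> \<longleftrightarrow> (\<forall>\<alpha>\<in>R. \<kappa> \<alpha> \<ge> 0) \<and>
     (\<forall>\<alpha>\<in>R. \<forall>\<beta>\<in>R. \<kappa> (refl_root \<alpha> \<beta>) = \<kappa> \<beta>)"

text \<open>Weight w_kappa, with the convention t^0 = 1 (also for t = 0).\<close>
definition dunkl_weight :: "'a::euclidean_space set \<Rightarrow> ('a \<Rightarrow> real) \<Rightarrow> 'a \<Rightarrow> real" where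
  "dunkl_weight Rp \<kappa> x =
     (\<Prod>\<alpha>\<in>Rp. if \<kappa> \<alpha> = 0 then 1 else \<bar>\<alpha> \<bullet> x\<bar> powr (2 * \<kappa> \<alpha>))"

definition dunkl_chi :: "'a set \<Rightarrow> ('a \<Rightarrow> real) \<Rightarrow> real" where
  "dunkl_chi Rp \<kappa> = (\<Sum>\<alpha>\<in>Rp. \<kappa> \<alpha>)"

definition dunkl_const :: "'a::euclidean_space set \<Rightarrow> ('a \<Rightarrow> real) \<Rightarrow> ennreal" where
  "dunkl_const Rp \<kappa> =
     (\<integral>\<^sup>+ x. ennreal (exp (- (norm x)\<^sup>2 / 2) * dunkl_weight Rp \<kappa> x) \<partial>lebesgue)"

definition dunkl_gauss :: "'a::euclidean_space set \<Rightarrow> ('a \<Rightarrow> real) \<Rightarrow> 'a measure" where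
  "dunkl_gauss Rp \<kappa> = density lebesgue
     (\<lambda>x. ennreal (exp (- (norm x)\<^sup>2 / 2) * dunkl_weight Rp \<kappa> x) / dunkl_const Rp \<kappa>)"

definition dunkl_L :: "'a::euclidean_space set \<Rightarrow> ('a \<Rightarrow> real) \<Rightarrow> real \<Rightarrow> 'a set \<Rightarrow> 'a set \<Rightarrow> ennreal" where
  "dunkl_L Rp \<kappa> s A B =
     (\<integral>\<^sup>+ x\<in>A. (\<integral>\<^sup>+ y\<in>B.
        ennreal (norm (x - y) powr (- (2 * dunkl_chi Rp \<kappa> + real DIM('a) + 2 * s)))
        \<partial>dunkl_gauss Rp \<kappa>) \<partial>dunkl_gauss Rp \<kappa>)"

definition dunkl_Per :: "'a::euclidean_space set \<Rightarrow> ('a \<Rightarrow> real) \<Rightarrow> real \<Rightarrow> 'a set \<Rightarrow> 'a set \<Rightarrow> ennreal" where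
  "dunkl_Per Rp \<kappa> s E \<Omega> =
     dunkl_L Rp \<kappa> s (E \<inter> \<Omega>) (- E \<inter> \<Omega>) +
     dunkl_L Rp \<kappa> s (E \<inter> \<Omega>) (- E \<inter> - \<Omega>) +
     dunkl_L Rp \<kappa> s (E \<inter> - \<Omega>) (- E \<inter> \<Omega>)"

end

theory Submission
  imports Defs
begin

lemma kernel_bound:
  fixes d e s s0 :: real
  assumes "e \<ge> 0" "0 < s" "s \<le> s0" "d \<ge> 0"
  shows "d powr -(e+2 * s) \<le> d powr -(e+2 * s0) + 1"
proof (cases "d \<le> 1")
  case True
  show ?thesis
  proof (cases "d = 0")
    case False
    then have "d powr -(e+2 * s) \<le> d powr -(e+2 * s0)"
      using True assms by (intro powr_mono') auto
    then show ?thesis by simp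
  qed simp
next
  case False
  then have "d powr -(e+2 * s) \<le> d powr 0"
    using assms by (intro powr_mono) auto
  moreover have "0 \<le> d powr -(e+2 * s0)" by simp
  ultimately show ?thesis using False by (smt (verit, best) powr_zero_eq_one)
qed

lemma L_le:
  fixes M :: "'a::euclidean_space measure"
  assumes fin: "finite_measure M" and sM: "sets M = sets lebesgue"
    and A: "A \<in> sets M" and B: "B \<in> sets M"
    and e: "e \<ge> 0" and s: "0 < s" "s \<le> s0"
  shows "(\<integral>\<^sup>+ x\<in>A. (\<integral>\<^sup>+ y\<in>B. ennreal (norm (x - y) powr (- (e + 2 * s))) \<partial>M) \<partial>M)
    \<le> (\<integral>\<^sup>+ x\<in>A. (\<integral>\<^sup>+ y\<in>B. ennreal (norm (x - y) powr (- (e + 2 * s0))) \<partial>M) \<partial>M)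
       + emeasure M (space M) * emeasure M (space M)"
proof -
  interpret finite_measure M by fact
  have idm[measurable]: "(\<lambda>x. x) \<in> M \<rightarrow>\<^sub>M borel"
  proof -
    have "(\<lambda>x::'a. x) \<in> lebesgue \<rightarrow>\<^sub>M borel"
      by (rule measurable_completion) simp
    then show ?thesis using measurable_cong_sets[OF sM refl] by blast
  qed
  note [measurable] = A B
  let ?k0 = "\<lambda>x y. ennreal (norm (x - y) powr (- (e + 2 * s0)))"
  have m0[measurable]: "(\<lambda>(x,y). ?k0 x y * indicator B y) \<in> borel_measurable (M \<Otimes>\<^sub>M M)"
    by measurable
  have mi[measurable]: "(\<lambda>x. \<integral>\<^sup>+ y. ?k0 x y * indicator B y \<partial>M) \<in> borel_measurable M"
    using borel_measurable_nn_integral[OF m0] by simp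
  have inner: "(\<integral>\<^sup>+ y\<in>B. ennreal (norm (x - y) powr (- (e + 2 * s))) \<partial>M)
      \<le> (\<integral>\<^sup>+ y. ?k0 x y * indicator B y \<partial>M) + emeasure M (space M)" for x
  proof -
    have "(\<integral>\<^sup>+ y\<in>B. ennreal (norm (x - y) powr (- (e + 2 * s))) \<partial>M)
       \<le> (\<integral>\<^sup>+ y. ?k0 x y * indicator B y + 1 \<partial>M)"
      apply (rule nn_integral_mono)
      subgoal for y
      proof -
        have "ennreal (norm (x - y) powr (- (e + 2 * s))) \<le> ennreal (norm (x - y) powr (- (e + 2 * s0)) + 1)"
          using kernel_bound[OF e s, of "norm (x - y)"] by (intro ennreal_leI) auto
        also have "\<dots> = ennreal (norm (x - y) powr (- (e + 2 * s0))) + 1"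
          by (subst ennreal_plus) auto
        finally show ?thesis by (auto simp: indicator_def)
      qed
      done
    also have "\<dots> = (\<integral>\<^sup>+ y. ?k0 x y * indicator B y \<partial>M) + emeasure M (space M)"
      by (subst nn_integral_add) auto
    finally show ?thesis .
  qed
  have "(\<integral>\<^sup>+ x\<in>A. (\<integral>\<^sup>+ y\<in>B. ennreal (norm (x - y) powr (- (e + 2 * s))) \<partial>M) \<partial>M)
     \<le> (\<integral>\<^sup>+ x. (\<integral>\<^sup>+ y. ?k0 x y * indicator B y \<partial>M) * indicator A x + emeasure M (space M) \<partial>M)"
    apply (rule nn_integral_mono)
    using inner by (auto simp: indicator_def add_increasing)
  also have "\<dots> = (\<integral>\<^sup>+ x. (\<integral>\<^sup>+ y. ?k0 x y * indicator B y \<partial>M) * indicator A x \<partial>M) + emeasure M (space M) * emeasure M (space M)"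
    by (subst nn_integral_add) auto
  finally show ?thesis by simp
qed

lemma gauss_facts:
  fixes Rp :: "'a::euclidean_space set"
  shows "sets (dunkl_gauss Rp \<kappa>) = sets lebesgue" "space (dunkl_gauss Rp \<kappa>) = UNIV"
    "emeasure (dunkl_gauss Rp \<kappa>) (space (dunkl_gauss Rp \<kappa>)) \<le> 1"
proof -
  let ?f = "\<lambda>x. ennreal (exp (- (norm x)\<^sup>2 / 2) * dunkl_weight Rp \<kappa> x)"
  have "?f \<in> borel_measurable lborel"
    unfolding dunkl_weight_def by measurable
  then have fm: "?f \<in> borel_measurable lebesgue"
    by (rule measurable_completion)
  show "sets (dunkl_gauss Rp \<kappa>) = sets lebesgue" "space (dunkl_gauss Rp \<kappa>) = UNIV"
    by (simp_all add: dunkl_gauss_def)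
  have "emeasure (dunkl_gauss Rp \<kappa>) (space (dunkl_gauss Rp \<kappa>))
      = (\<integral>\<^sup>+ x. ?f x / dunkl_const Rp \<kappa> * indicator UNIV x \<partial>lebesgue)"
    unfolding dunkl_gauss_def using fm by (subst emeasure_density) auto
  also have "\<dots> = (\<integral>\<^sup>+ x. ?f x / dunkl_const Rp \<kappa> \<partial>lebesgue)" by simp
  also have "\<dots> = dunkl_const Rp \<kappa> / dunkl_const Rp \<kappa>"
    unfolding dunkl_const_def using fm by (rule nn_integral_divide)
  also have "\<dots> \<le> 1"
    by (cases "dunkl_const Rp \<kappa> = 0"; cases "dunkl_const Rp \<kappa> = top")
       (auto simp: less_top)
  finally show "emeasure (dunkl_gauss Rp \<kappa>) (space (dunkl_gauss Rp \<kappa>)) \<le> 1" .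
qed

theorem proposition1p10:
  fixes R Rp :: "'a::euclidean_space set" and \<kappa> :: "'a \<Rightarrow> real"
    and \<Omega> E :: "'a set" and s0 :: real
  assumes "root_system R" and "positive_subsystem R Rp" and "multiplicity R \<kappa>"
    and "open \<Omega>" and "E \<in> sets lebesgue"
    and "0 < s0" and "s0 < 1/2"
    and "dunkl_Per Rp \<kappa> s0 E \<Omega> < \<infinity>"
  shows "((\<lambda>s. ennreal s * dunkl_Per Rp \<kappa> s E \<Omega>) \<longlongrightarrow> 0) (at_right 0)"
proof -
  let ?\<nu> = "dunkl_gauss Rp \<kappa>"
  note gf = gauss_facts[of Rp \<kappa>]
  let ?m = "emeasure ?\<nu> (space ?\<nu>)"
  have fin: "finite_measure ?\<nu>"
    by (rule finite_measureI) (use gf(3) in \<open>auto simp: top_unique\<close>)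
  define e where "e = 2 * dunkl_chi Rp \<kappa> + real DIM('a)"
  have "Rp \<subseteq> R" using assms(2) unfolding positive_subsystem_def by auto
  then have "dunkl_chi Rp \<kappa> \<ge> 0"
    using assms(3) unfolding multiplicity_def dunkl_chi_def by (auto intro!: sum_nonneg)
  then have e: "e \<ge> 0" unfolding e_def by simp
  have Om: "\<Omega> \<in> sets lebesgue" using assms(4) by simp
  have ms: "E \<inter> \<Omega> \<in> sets ?\<nu>" "- E \<inter> \<Omega> \<in> sets ?\<nu>" "- E \<inter> - \<Omega> \<in> sets ?\<nu>" "E \<inter> - \<Omega> \<in> sets ?\<nu>"
    using assms(5) Om unfolding gf(1) Compl_eq_Diff_UNIV
    by (auto intro!: sets.Int sets.Diff simp del: Diff_UNIV)
  have Lle: "dunkl_L Rp \<kappa> s A B \<le> dunkl_L Rp \<kappa> s0 A B + ?m * ?m"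
    if "A \<in> sets ?\<nu>" "B \<in> sets ?\<nu>" "0 < s" "s \<le> s0" for A B s
    unfolding dunkl_L_def
    using L_le[OF fin gf(1) that(1,2) e that(3,4)] by (simp add: e_def algebra_simps)
  define K where "K = dunkl_Per Rp \<kappa> s0 E \<Omega> + 3 * (?m * ?m)"
  have Kfin: "K < \<infinity>"
  proof -
    have "?m * ?m \<le> 1 * 1" using gf(3) by (intro mult_mono) auto
    then show ?thesis unfolding K_def using assms(8)
      by (simp add: ennreal_mult_less_top less_top[symmetric])
        (metis ennreal_mult_less_top ennreal_numeral less_top not_one_less_zero top_neq_numeral top_unique ennreal_one_less_top linorder_not_le)
  qed
  have Ple: "dunkl_Per Rp \<kappa> s E \<Omega> \<le> K" if "0 < s" "s \<le> s0" for s
  proof -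
    have "dunkl_Per Rp \<kappa> s E \<Omega> \<le> (dunkl_L Rp \<kappa> s0 (E \<inter> \<Omega>) (- E \<inter> \<Omega>) + ?m * ?m) +
       (dunkl_L Rp \<kappa> s0 (E \<inter> \<Omega>) (- E \<inter> - \<Omega>) + ?m * ?m) +
       (dunkl_L Rp \<kappa> s0 (E \<inter> - \<Omega>) (- E \<inter> \<Omega>) + ?m * ?m)"
      unfolding dunkl_Per_def using Lle ms that by (intro add_mono) auto
    also have "\<dots> = K"
    proof -
      have h3: "(3::ennreal) * a = a + a + a" for a
      proof -
        have "(3::ennreal) = 1 + 1 + 1" by simp
        then have "(3::ennreal) * a = (1 + 1 + 1) * a" by (rule arg_cong)
        then show ?thesis by (simp only: distrib_right mult_1)
      qed
      show ?thesis unfolding K_def dunkl_Per_def h3 by (simp add: algebra_simps)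
    qed
    finally show ?thesis .
  qed
  obtain k where k: "K = ennreal k" "k \<ge> 0" using Kfin
    by (cases K) auto
  have lim: "((\<lambda>s. ennreal (s * k)) \<longlongrightarrow> 0) (at_right 0)"
  proof -
    have "((\<lambda>s. s * k) \<longlongrightarrow> 0 * k) (at_right (0::real))"
      by (intro tendsto_intros)
    then show ?thesis using tendsto_ennrealI[of "\<lambda>s. s * k" 0] by simp
  qed
  show ?thesis
  proof (rule tendsto_sandwich[OF _ _ tendsto_const lim])
    show "\<forall>\<^sub>F s in at_right 0. 0 \<le> ennreal s * dunkl_Per Rp \<kappa> s E \<Omega>" by simp
    have "\<forall>\<^sub>F s in at_right 0. 0 < s \<and> s < s0"
      using eventually_at_right_real[OF assms(6)] by simp
    then show "\<forall>\<^sub>F s in at_right 0. ennreal s * dunkl_Per Rp \<kappa> s E \<Omega> \<le> ennreal (s * k)"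
    proof (rule eventually_mono)
      fix s :: real assume s: "0 < s \<and> s < s0"
      have "ennreal s * dunkl_Per Rp \<kappa> s E \<Omega> \<le> ennreal s * K"
        using Ple[of s] s by (intro mult_left_mono) auto
      also have "\<dots> = ennreal (s * k)" using k s by (simp add: ennreal_mult)
      finally show "ennreal s * dunkl_Per Rp \<kappa> s E \<Omega> \<le> ennreal (s * k)" .
    qed
  qed
qed

end
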